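(* Let $m,n\ge2$ be integers and let $H$ be the graph on the vertex set $\{x_{i,j}: i\in[m], j\in[n]\}$ with edge set $\{\{x_{i,j},x_{i',j+1}\}: 1\le i<i'\le m,\ 1\le j\le n-1\}$. Then $\operatorname{cochord}(H)\le n-1$.
   Context: A graph is co-chordal if its complement is chordal (every induced cycle has length 3). The co-chordal cover number $\operatorname{cochord}(G)$ is the minimum $k$ such that there are co-chordal subgraphs $G_1,\dots,G_k$ of $G$ with $E(G)=\bigcup_i E(G_i)$. *)

theory Defs
  imports Main
begin

definition simple_graph :: "'a set \<Rightarrow> 'a set set \<Rightarrow> bool" where
  "simple_graph V E \<longleftrightarrow> (\<forall>e\<in>E. \<exists>u v. u \<in> V \<and> v \<in> V \<and> u \<noteq> v \<and> e = {u, v})"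

definition complement_edges :: "'a set \<Rightarrow> 'a set set \<Rightarrow> 'a set set" where
  "complement_edges V E = {{u, v} | u v. u \<in> V \<and> v \<in> V \<and> u \<noteq> v \<and> {u, v} \<notin> E}"

definition induced_cycle :: "'a set \<Rightarrow> 'a set set \<Rightarrow> 'a list \<Rightarrow> bool" where
  "induced_cycle V E cs \<longleftrightarrow>
     length cs \<ge> 3 \<and> distinct cs \<and> set cs \<subseteq> V \<and>
     (\<forall>i < length cs. \<forall>j < length cs.
        ({cs ! i, cs ! j} \<in> E \<longleftrightarrow>
          (j = (i + 1) mod length cs \<or> i = (j + 1) mod length cs)))"

definition chordal :: "'a set \<Rightarrow> 'a set set \<Rightarrow> bool" where
  "chordal V E \<longleftrightarrow> (\<forall>cs. induced_cycle V E cs \<longrightarrow> length cs = 3)"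

definition co_chordal :: "'a set \<Rightarrow> 'a set set \<Rightarrow> bool" where
  "co_chordal V E \<longleftrightarrow> chordal V (complement_edges V E)"

definition subgraph :: "'a set \<Rightarrow> 'a set set \<Rightarrow> 'a set \<Rightarrow> 'a set set \<Rightarrow> bool" where
  "subgraph V' E' V E \<longleftrightarrow> simple_graph V' E' \<and> V' \<subseteq> V \<and> E' \<subseteq> E"

definition cochord :: "'a set \<Rightarrow> 'a set set \<Rightarrow> nat" where
  "cochord V E = (LEAST k. \<exists>Gs :: ('a set \<times> 'a set set) list.
      length Gs = k \<and>
      (\<forall>G \<in> set Gs. subgraph (fst G) (snd G) V E \<and> co_chordal (fst G) (snd G)) \<and>
      E = (\<Union>G \<in> set Gs. snd G))"

definition H_verts :: "nat \<Rightarrow> nat \<Rightarrow> (nat \<times> nat) set" where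
  "H_verts m n = {1..m} \<times> {1..n}"

definition H_edges :: "nat \<Rightarrow> nat \<Rightarrow> (nat \<times> nat) set set" where
  "H_edges m n = {{(i, j), (i', j + 1)} | i i' j. 1 \<le> i \<and> i < i' \<and> i' \<le> m \<and> 1 \<le> j \<and> j \<le> n - 1}"

end

theory Submission
  imports Defs
begin

definition Vj :: "nat \<Rightarrow> nat \<Rightarrow> (nat \<times> nat) set" where
  "Vj m j = {1..m} \<times> {j, Suc j}"

definition Ej :: "nat \<Rightarrow> nat \<Rightarrow> (nat \<times> nat) set set" where
  "Ej m j = {{(i, j), (i', Suc j)} | i i'. 1 \<le> i \<and> i < i' \<and> i' \<le> m}"

lemma four:
  fixes s0 s1 s2 s3 p0 p1 p2 p3 j :: nat
  assumes "\<not>(s0 = j \<and> s1 = Suc j \<and> p0 < p1) \<and> \<not>(s1 = j \<and> s0 = Suc j \<and> p1 < p0)"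
   "\<not>(s1 = j \<and> s2 = Suc j \<and> p1 < p2) \<and> \<not>(s2 = j \<and> s1 = Suc j \<and> p2 < p1)"
   "\<not>(s2 = j \<and> s3 = Suc j \<and> p2 < p3) \<and> \<not>(s3 = j \<and> s2 = Suc j \<and> p3 < p2)"
   "\<not>(s3 = j \<and> s0 = Suc j \<and> p3 < p0) \<and> \<not>(s0 = j \<and> s3 = Suc j \<and> p0 < p3)"
   "(s0 = j \<and> s2 = Suc j \<and> p0 < p2) \<or> (s2 = j \<and> s0 = Suc j \<and> p2 < p0)"
   "(s1 = j \<and> s3 = Suc j \<and> p1 < p3) \<or> (s3 = j \<and> s1 = Suc j \<and> p3 < p1)"
  shows False
  using assms by (elim disjE; simp; linarith)
lemma five:
  fixes s0 s1 s2 s3 s4 j :: nat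
  assumes "s0 \<noteq> s2" "s1 \<noteq> s3" "s0 \<noteq> s3" "s2 \<noteq> s4" "s1 \<noteq> s4"
   "s0 = j \<or> s0 = Suc j" "s1 = j \<or> s1 = Suc j" "s2 = j \<or> s2 = Suc j" "s3 = j \<or> s3 = Suc j" "s4 = j \<or> s4 = Suc j"
  shows False
  using assms by auto

lemma diffcol: "\<not> (\<not>(a = j \<and> b = Suc j \<and> X) \<and> \<not>(b = j \<and> a = Suc j \<and> Y)) \<Longrightarrow> a \<noteq> (b::nat)"
  by auto

lemma adjC:
  assumes "x \<in> Vj m j" "y \<in> Vj m j" "x \<noteq> y"
  shows "{x, y} \<in> complement_edges (Vj m j) (Ej m j) \<longleftrightarrow>
    \<not>(snd x = j \<and> snd y = Suc j \<and> fst x < fst y) \<and> \<not>(snd y = j \<and> snd x = Suc j \<and> fst y < fst x)"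
proof -
  have "{x, y} \<in> complement_edges (Vj m j) (Ej m j) \<longleftrightarrow> {x,y} \<notin> Ej m j"
    using assms unfolding complement_edges_def
  proof (intro iffI)
    assume "{x, y} \<in> {{u, v} |u v. u \<in> Vj m j \<and> v \<in> Vj m j \<and> u \<noteq> v \<and> {u, v} \<notin> Ej m j}"
    then obtain u v where "{x,y} = {u,v}" "{u, v} \<notin> Ej m j" by blast
    then show "{x,y} \<notin> Ej m j" by simp
  qed blast
  also have "\<dots> \<longleftrightarrow> \<not>(snd x = j \<and> snd y = Suc j \<and> fst x < fst y) \<and> \<not>(snd y = j \<and> snd x = Suc j \<and> fst y < fst x)"
    using assms unfolding Ej_def Vj_def by (cases x; cases y; auto simp: doubleton_eq_iff)
  finally show ?thesis .
qed

lemma cochordal_j: "co_chordal (Vj m j) (Ej m j)"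
  unfolding co_chordal_def chordal_def
proof (intro allI impI)
  fix cs assume ic: "induced_cycle (Vj m j) (complement_edges (Vj m j) (Ej m j)) cs"
  define k where "k = length cs"
  let ?C = "complement_edges (Vj m j) (Ej m j)"
  have k3: "k \<ge> 3" and dist: "distinct cs" and sub: "set cs \<subseteq> Vj m j"
    and cyc: "\<And>a b. a < k \<Longrightarrow> b < k \<Longrightarrow> ({cs ! a, cs ! b} \<in> ?C \<longleftrightarrow>
          (b = (a + 1) mod k \<or> a = (b + 1) mod k))"
    using ic unfolding induced_cycle_def k_def by auto
  have inV: "\<And>a. a < k \<Longrightarrow> cs ! a \<in> Vj m j" using sub k_def by auto
  have ne: "\<And>a b. a < k \<Longrightarrow> b < k \<Longrightarrow> a \<noteq> b \<Longrightarrow> cs ! a \<noteq> cs ! b"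
    using dist k_def by (simp add: nth_eq_iff_index_eq)
  have col: "\<And>a. a < k \<Longrightarrow> snd (cs ! a) = j \<or> snd (cs ! a) = Suc j"
  proof -
    fix a assume "a < k"
    from inV[OF this] show "snd (cs ! a) = j \<or> snd (cs ! a) = Suc j" by (simp add: Vj_def mem_Times_iff)
  qed
  have A: "\<And>a b. a < k \<Longrightarrow> b < k \<Longrightarrow> a \<noteq> b \<Longrightarrow> ({cs ! a, cs ! b} \<in> ?C \<longleftrightarrow>
     \<not>(snd (cs!a) = j \<and> snd (cs!b) = Suc j \<and> fst (cs!a) < fst (cs!b)) \<and>
     \<not>(snd (cs!b) = j \<and> snd (cs!a) = Suc j \<and> fst (cs!b) < fst (cs!a)))"
    by (intro adjC inV ne)
  show "k = 3" unfolding k_def[symmetric]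
  proof (rule ccontr)
    assume "k \<noteq> 3"
    hence k4: "k \<ge> 4" using k3 by simp
    show False
    proof (cases "k = 4")
      case True
      have e01: "{cs!0, cs!1} \<in> ?C" using cyc[of 0 1] True by simp
      have e12: "{cs!1, cs!2} \<in> ?C" using cyc[of 1 2] True by simp
      have e23: "{cs!2, cs!3} \<in> ?C" using cyc[of 2 3] True by simp
      have e30: "{cs!3, cs!0} \<in> ?C" using cyc[of 3 0] True by simp
      have n02: "{cs!0, cs!2} \<notin> ?C" using cyc[of 0 2] True by simp
      have n13: "{cs!1, cs!3} \<notin> ?C" using cyc[of 1 3] True by simp
      have "\<not>(snd (cs!0) = j \<and> snd (cs!1) = Suc j \<and> fst (cs!0) < fst (cs!1)) \<and> \<not>(snd (cs!1) = j \<and> snd (cs!0) = Suc j \<and> fst (cs!1) < fst (cs!0))"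
        using e01 A[of 0 1] True by simp
      moreover have "\<not>(snd (cs!1) = j \<and> snd (cs!2) = Suc j \<and> fst (cs!1) < fst (cs!2)) \<and> \<not>(snd (cs!2) = j \<and> snd (cs!1) = Suc j \<and> fst (cs!2) < fst (cs!1))"
        using e12 A[of 1 2] True by simp
      moreover have "\<not>(snd (cs!2) = j \<and> snd (cs!3) = Suc j \<and> fst (cs!2) < fst (cs!3)) \<and> \<not>(snd (cs!3) = j \<and> snd (cs!2) = Suc j \<and> fst (cs!3) < fst (cs!2))"
        using e23 A[of 2 3] True by simp
      moreover have "\<not>(snd (cs!3) = j \<and> snd (cs!0) = Suc j \<and> fst (cs!3) < fst (cs!0)) \<and> \<not>(snd (cs!0) = j \<and> snd (cs!3) = Suc j \<and> fst (cs!0) < fst (cs!3))"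
        using e30 A[of 3 0] True by simp
      moreover have "(snd (cs!0) = j \<and> snd (cs!2) = Suc j \<and> fst (cs!0) < fst (cs!2)) \<or> (snd (cs!2) = j \<and> snd (cs!0) = Suc j \<and> fst (cs!2) < fst (cs!0))"
        using n02 A[of 0 2] True by auto
      moreover have "(snd (cs!1) = j \<and> snd (cs!3) = Suc j \<and> fst (cs!1) < fst (cs!3)) \<or> (snd (cs!3) = j \<and> snd (cs!1) = Suc j \<and> fst (cs!3) < fst (cs!1))"
        using n13 A[of 1 3] True by auto
      ultimately show False by (rule four)
    next
      case False
      hence k5: "k \<ge> 5" using k4 by simp
      have n02: "{cs!0, cs!2} \<notin> ?C" using cyc[of 0 2] k5 by simp
      have n13: "{cs!1, cs!3} \<notin> ?C" using cyc[of 1 3] k5 by simp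
      have n03: "{cs!0, cs!3} \<notin> ?C" using cyc[of 0 3] k5 by simp
      have n24: "{cs!2, cs!4} \<notin> ?C" using cyc[of 2 4] k5 by (cases "k = 5") simp_all
      have n14: "{cs!1, cs!4} \<notin> ?C" using cyc[of 1 4] k5 by (cases "k = 5") simp_all
      have "snd (cs!0) \<noteq> snd (cs!2)" using n02 A[of 0 2] k5 by (intro diffcol) simp
      moreover have "snd (cs!1) \<noteq> snd (cs!3)" using n13 A[of 1 3] k5 by (intro diffcol) simp
      moreover have "snd (cs!0) \<noteq> snd (cs!3)" using n03 A[of 0 3] k5 by (intro diffcol) simp
      moreover have "snd (cs!2) \<noteq> snd (cs!4)" using n24 A[of 2 4] k5 by (intro diffcol) simp
      moreover have "snd (cs!1) \<noteq> snd (cs!4)" using n14 A[of 1 4] k5 by (intro diffcol) simp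
      moreover have c: "\<And>a. a < 5 \<Longrightarrow> snd (cs ! a) = j \<or> snd (cs ! a) = Suc j" using col k5 by simp
      ultimately show False by (rule five) (simp_all add: c)
    qed
  qed
qed

theorem lemma3p10:
  fixes m n :: nat
  assumes "m \<ge> 2" and "n \<ge> 2"
  shows "cochord (H_verts m n) (H_edges m n) \<le> n - 1"
proof -
  define Gs where "Gs = map (\<lambda>j. (Vj m j, Ej m j)) [1..<n]"
  have len: "length Gs = n - 1" by (simp add: Gs_def)
  have sg: "\<forall>G \<in> set Gs. subgraph (fst G) (snd G) (H_verts m n) (H_edges m n) \<and> co_chordal (fst G) (snd G)"
  proof
    fix G assume "G \<in> set Gs"
    then obtain j where j: "1 \<le> j" "j < n" and G: "G = (Vj m j, Ej m j)" by (auto simp: Gs_def)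
    have "simple_graph (Vj m j) (Ej m j)"
      unfolding simple_graph_def
    proof
      fix e assume "e \<in> Ej m j"
      then obtain i i' where e: "e = {(i, j), (i', Suc j)}" "1 \<le> i" "i < i'" "i' \<le> m"
        unfolding Ej_def by blast
      have "(i, j) \<in> Vj m j" "(i', Suc j) \<in> Vj m j" "(i, j) \<noteq> (i', Suc j)" using e by (auto simp: Vj_def)
      then show "\<exists>u v. u \<in> Vj m j \<and> v \<in> Vj m j \<and> u \<noteq> v \<and> e = {u, v}" using e(1) by blast
    qed
    moreover have "Vj m j \<subseteq> H_verts m n" using j unfolding Vj_def H_verts_def by auto
    moreover have "Ej m j \<subseteq> H_edges m n"
    proof
      fix e assume "e \<in> Ej m j"
      then obtain i i' where e: "e = {(i, j), (i', j + 1)}" "1 \<le> i" "i < i'" "i' \<le> m"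
        unfolding Ej_def by auto
      have "j \<le> n - 1" using j by simp
      then show "e \<in> H_edges m n" unfolding H_edges_def using e j(1) by blast
    qed
    ultimately show "subgraph (fst G) (snd G) (H_verts m n) (H_edges m n) \<and> co_chordal (fst G) (snd G)"
      using G cochordal_j by (simp add: subgraph_def)
  qed
  have un: "H_edges m n = (\<Union>G \<in> set Gs. snd G)"
  proof
    show "H_edges m n \<subseteq> (\<Union>G \<in> set Gs. snd G)"
    proof
      fix e assume "e \<in> H_edges m n"
      then obtain i i' j where e: "e = {(i, j), (i', j + 1)}" "1 \<le> i" "i < i'" "i' \<le> m" "1 \<le> j" "j \<le> n - 1"
        unfolding H_edges_def by blast
      have "j \<in> set [1..<n]" using e assms by auto
      then have "(Vj m j, Ej m j) \<in> set Gs" unfolding Gs_def set_map by (rule imageI)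
      moreover have "e = {(i, j), (i', Suc j)}" using e(1) by simp
      then have "e \<in> Ej m j" unfolding Ej_def using e(2-4) by blast
      ultimately show "e \<in> (\<Union>G \<in> set Gs. snd G)" by force
    qed
  next
    show "(\<Union>G \<in> set Gs. snd G) \<subseteq> H_edges m n"
      using sg unfolding subgraph_def by blast
  qed
  have "\<exists>Gs :: ((nat \<times> nat) set \<times> (nat \<times> nat) set set) list.
      length Gs = n - 1 \<and>
      (\<forall>G \<in> set Gs. subgraph (fst G) (snd G) (H_verts m n) (H_edges m n) \<and> co_chordal (fst G) (snd G)) \<and>
      H_edges m n = (\<Union>G \<in> set Gs. snd G)"
    using len sg un by blast
  then show ?thesis unfolding cochord_def by (rule Least_le)
qed

end
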